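(* For every $n\ge 1$: (a) the number of Dyck paths $D$ of semilength $n$ such that $\mathcal N\cap\mathcal D\subseteq\mathcal F$ equals the number of Motzkin paths of length $n$; (b) the number of Dyck paths $D$ of semilength $n$ such that $\mathcal N\cap\mathcal D=\emptyset$ equals the number of Riordan paths of length $n$.
   Context: Work in an $n\times n$ array of unit cells; the cell $(i,j)$ is the one in column $i$ (columns numbered $1,\dots,n$ from left to right) and row $j$ (rows numbered $1,\dots,n$ from bottom to top). A Dyck path of semilength $n$ is a lattice path from $(0,0)$ to $(n,n)$ with unit north and east steps that never goes below the line $y=x$. Row-area sequence: $r_0=-1$ and, for $1\le k\le n$, $r_k=k-1-x_k$ where $x_k$ is the $x$-coordinate of the $k$-th north step (the number of full cells in row $k$ strictly between the path and the diagonal). Column-area sequence: for $1\le k\le n$, $c_k=y_k-k$ where $y_k$ is the height of the $k$-th east step (the number of full cells in column $k$ strictly between the path and the diagonal), and $c_{n+1}=-1$. A valley of $D$ is an east step immediately followed by a north step; if the east step is the $k$-th east step and the north step is the $\ell$-th north step, the valley is at position $(k,\ell)$ (column $k$, row $\ell$). Define: $\mathcal D=\{k\in\{1,\dots,n\}: c_{k+1}=c_k-1\}$; $\mathcal F=\{k\in\{1,\dots,n\}: r_{k+1+c_{k+1}}=r_{k-1}+c_{k+1}+2\}$; $\mathcal N$ = the set of $k\in\{1,\dots,n\}$ such that row $k$ contains no valley of $D$. A Motzkin path of length $n$ is a lattice path from $(0,0)$ to $(n,0)$ with steps $(1,1)$, $(1,-1)$, $(1,0)$ never going below the $x$-axis;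 a Riordan path is a Motzkin path with no level step $(1,0)$ at height zero. *)

theory Defs
  imports Main
begin

(* A Dyck path is a list of steps: True = north step, False = east step. *)
definition dyck_path :: "nat \<Rightarrow> bool list \<Rightarrow> bool" where
  "dyck_path n p \<longleftrightarrow> length p = 2 * n \<and> length (filter id p) = n \<and>
     (\<forall>i \<le> length p. length (filter Not (take i p)) \<le> length (filter id (take i p)))"

definition north_idx :: "bool list \<Rightarrow> nat list" where
  "north_idx p = filter (\<lambda>i. p ! i) [0..<length p]"
definition east_idx :: "bool list \<Rightarrow> nat list" where
  "east_idx p = filter (\<lambda>i. \<not> p ! i) [0..<length p]"

definition xcoord :: "bool list \<Rightarrow> nat \<Rightarrow> nat" where
  "xcoord p k = length (filter Not (take (north_idx p ! (k - 1)) p))"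
definition ycoord :: "bool list \<Rightarrow> nat \<Rightarrow> nat" where
  "ycoord p k = length (filter id (take (east_idx p ! (k - 1)) p))"

definition row_area :: "bool list \<Rightarrow> nat \<Rightarrow> int" where
  "row_area p k = (if k = 0 then -1 else int k - 1 - int (xcoord p k))"
definition col_area :: "nat \<Rightarrow> bool list \<Rightarrow> nat \<Rightarrow> int" where
  "col_area n p k = (if k = n + 1 then -1 else int (ycoord p k) - int k)"

(* valley at (k,l): the k-th east step is immediately followed by the l-th north step *)
definition valley :: "bool list \<Rightarrow> nat \<Rightarrow> nat \<Rightarrow> bool" where
  "valley p k l \<longleftrightarrow> (\<exists>i. Suc i < length p \<and> \<not> p ! i \<and> p ! Suc i \<and>
     length (filter Not (take (Suc i) p)) = k \<and> length (filter id (take (Suc (Suc i)) p)) = l)"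

definition setD :: "nat \<Rightarrow> bool list \<Rightarrow> nat set" where
  "setD n p = {k \<in> {1..n}. col_area n p (k + 1) = col_area n p k - 1}"
definition setF :: "nat \<Rightarrow> bool list \<Rightarrow> nat set" where
  "setF n p = {k \<in> {1..n}.
     row_area p (nat (int k + 1 + col_area n p (k + 1))) =
     row_area p (k - 1) + col_area n p (k + 1) + 2}"
definition setN :: "nat \<Rightarrow> bool list \<Rightarrow> nat set" where
  "setN n p = {k \<in> {1..n}. \<not> (\<exists>c. valley p c k)}"

definition motzkin_path :: "nat \<Rightarrow> int list \<Rightarrow> bool" where
  "motzkin_path n s \<longleftrightarrow> length s = n \<and> set s \<subseteq> {-1, 0, 1} \<and>
     (\<forall>i \<le> n. sum_list (take i s) \<ge> 0) \<and> sum_list s = 0"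
definition riordan_path :: "nat \<Rightarrow> int list \<Rightarrow> bool" where
  "riordan_path n s \<longleftrightarrow> motzkin_path n s \<and>
     (\<forall>i < n. s ! i = 0 \<longrightarrow> sum_list (take i s) \<noteq> 0)"

end

theory Submission
  imports Defs
begin


definition validX :: "nat \<Rightarrow> (nat \<Rightarrow> nat) \<Rightarrow> bool" where
"validX n X \<longleftrightarrow> X 0 = 0 \<and> (\<forall>k. 1 \<le> k \<longrightarrow> k \<le> n \<longrightarrow> X k < k) \<and> (\<forall>j k. j \<le> k \<longrightarrow> k \<le> n \<longrightarrow> X j \<le> X k)"

definition sOf :: "nat \<Rightarrow> (nat\<Rightarrow>nat) \<Rightarrow> int list" where
"sOf n X = map (\<lambda>k. of_bool (k \<in> X ` {1..n}) - of_bool (X k \<noteq> X (k-1))) [1..<Suc n]"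

definition goodX :: "nat \<Rightarrow> (nat\<Rightarrow>nat) \<Rightarrow> bool" where
"goodX n X \<longleftrightarrow> (\<forall>k. 1 \<le> k \<longrightarrow> k < n \<longrightarrow> X k = X (k-1) \<longrightarrow> k \<notin> X ` {1..n} \<longrightarrow>
   X (card {j\<in>{1..n}. X j < Suc k}) = X k)"

lemma sOf_length[simp]: "length (sOf n X) = n" by (simp add: sOf_def)

lemma sOf_nth: "k < n \<Longrightarrow> sOf n X ! k = of_bool (Suc k \<in> X ` {1..n}) - of_bool (X (Suc k) \<noteq> X k)"
  unfolding sOf_def by (simp del: upt_Suc)

lemma validX_mono: "validX n X \<Longrightarrow> j \<le> k \<Longrightarrow> k \<le> n \<Longrightarrow> X j \<le> X k"
  by (simp add: validX_def)
lemma validX_lt: "validX n X \<Longrightarrow> 1 \<le> k \<Longrightarrow> k \<le> n \<Longrightarrow> X k < k"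
  by (simp add: validX_def)
lemma validX_0: "validX n X \<Longrightarrow> X 0 = 0"
  by (simp add: validX_def)

lemma H_formula:
  assumes vX: "validX n X" 
  shows "k \<le> n \<Longrightarrow> sum_list (take k (sOf n X)) = int (card {v \<in> X`{1..n}. X k < v \<and> v \<le> k})"
proof (induction k)
  case 0
  have "{v \<in> X`{1..n}. X 0 < v \<and> v \<le> 0} = {}" by auto
  then show ?case by simp
next
  case (Suc k)
  let ?V = "X`{1..n}"
  let ?A = "{v \<in> ?V. X k < v \<and> v \<le> k}"
  let ?B = "{v \<in> ?V. X (Suc k) < v \<and> v \<le> Suc k}"
  have kn: "k < n" using Suc by simp
  have IH: "sum_list (take k (sOf n X)) = int (card ?A)" using Suc by simp
  have tk: "take (Suc k) (sOf n X) = take k (sOf n X) @ [sOf n X ! k]"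
    using kn by (simp add: take_Suc_conv_app_nth)
  have fA: "finite ?A" by simp
  have mono: "X k \<le> X (Suc k)" using validX_mono[OF vX, of k "Suc k"] kn by simp
  have lt: "X (Suc k) < Suc k" using validX_lt[OF vX, of "Suc k"] kn by simp
  show ?case
  proof (cases "X (Suc k) = X k")
    case True
    have "?B = ?A \<union> ({Suc k} \<inter> ?V)" using True lt by auto
    moreover have "?A \<inter> ({Suc k} \<inter> ?V) = {}" by auto
    ultimately have "card ?B = card ?A + card ({Suc k} \<inter> ?V)"
      by (simp add: card_Un_disjoint)
    moreover have "card ({Suc k} \<inter> ?V) = of_bool (Suc k \<in> ?V)" by auto
    ultimately show ?thesis using tk IH True kn by (simp add: sOf_nth)
  next
    case False
    have gt: "X k < X (Suc k)" using False mono by simp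
    have inV: "X (Suc k) \<in> ?V" using kn by auto
    have gap: "\<not> (X k < v \<and> v < X (Suc k))" if vin: "v \<in> ?V" for v
    proof -
      obtain j where j: "j \<in> {1..n}" "v = X j" using vin by auto
      show ?thesis
      proof (cases "j \<le> k")
        case True then show ?thesis using validX_mono[OF vX, of j k] kn j by simp
      next
        case False then show ?thesis using validX_mono[OF vX, of "Suc k" j] kn j by simp
      qed
    qed
    let ?C = "{v \<in> ?V. X (Suc k) < v \<and> v \<le> k}"
    have A: "?A = insert (X (Suc k)) ?C"
    proof (rule set_eqI)
      fix v show "v \<in> ?A \<longleftrightarrow> v \<in> insert (X (Suc k)) ?C"
      proof
        assume "v \<in> ?A"
        then show "v \<in> insert (X (Suc k)) ?C" using gap[of v] by auto
      next
        assume "v \<in> insert (X (Suc k)) ?C"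
        then show "v \<in> ?A" using gt inV lt by auto
      qed
    qed
    have "X (Suc k) \<notin> ?C" by simp
    hence cA: "card ?A = Suc (card ?C)" using A by simp
    have B: "?B = ?C \<union> ({Suc k} \<inter> ?V)" using lt by auto
    moreover have "?C \<inter> ({Suc k} \<inter> ?V) = {}" by auto
    ultimately have "card ?B = card ?C + card ({Suc k} \<inter> ?V)"
      by (simp add: card_Un_disjoint)
    moreover have "card ({Suc k} \<inter> ?V) = of_bool (Suc k \<in> ?V)" by auto
    ultimately show ?thesis using tk IH False kn cA by (simp add: sOf_nth)
  qed
qed

lemma H_n_zero: assumes vX: "validX n X" shows "sum_list (sOf n X) = 0"
proof -
  have "sum_list (sOf n X) = sum_list (take n (sOf n X))" by simp
  also have "\<dots> = int (card {v \<in> X`{1..n}. X n < v \<and> v \<le> n})" using H_formula[OF vX, of n] by simp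
  also have "{v \<in> X`{1..n}. X n < v \<and> v \<le> n} = {}"
    using validX_mono[OF vX] by fastforce
  finally show ?thesis by simp
qed

lemma motzkin_sOf: assumes vX: "validX n X" shows "motzkin_path n (sOf n X)"
proof -
  have "set (sOf n X) \<subseteq> {-1,0,1}" unfolding sOf_def by (auto simp: of_bool_def split: if_splits)
  moreover have "\<forall>i\<le>n. sum_list (take i (sOf n X)) \<ge> 0" using H_formula[OF vX] by simp
  ultimately show ?thesis unfolding motzkin_path_def using H_n_zero[OF vX] by simp
qed


lemma key_F:
  assumes vX: "validX n X" and k: "1 \<le> k" "k < n"
  shows "X (card {j\<in>{1..n}. X j < Suc k}) = X k \<longleftrightarrow> (\<forall>j\<in>{1..n}. X j \<le> X k \<or> Suc k \<le> X j)"
proof -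
  define S where "S = {j\<in>{1..n}. X j < Suc k}"
  have fS: "finite S" unfolding S_def by simp
  have sk: "Suc k \<in> S" unfolding S_def using k validX_lt[OF vX, of "Suc k"] by simp
  hence ne: "S \<noteq> {}" by auto
  define m where "m = Max S"
  have mS: "m \<in> S" unfolding m_def using fS ne by simp
  have Sm: "S = {1..m}"
  proof (rule set_eqI)
    fix i show "i \<in> S \<longleftrightarrow> i \<in> {1..m}"
    proof
      assume "i \<in> S" then show "i \<in> {1..m}" unfolding m_def using fS S_def by auto
    next
      assume i: "i \<in> {1..m}"
      have "m \<le> n" "X m < Suc k" using mS unfolding S_def by auto
      then show "i \<in> S" using i validX_mono[OF vX, of i m] unfolding S_def by auto
    qed
  qed
  hence cm: "card S = m" by simp
  have km: "Suc k \<le> m" using sk Sm by auto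
  have Xm: "X m < Suc k" "m \<le> n" using mS unfolding S_def by auto
  have Xkm: "X k \<le> X m" using validX_mono[OF vX, of k m] km Xm by simp
  show ?thesis
  proof
    assume eq: "X (card {j\<in>{1..n}. X j < Suc k}) = X k"
    show "\<forall>j\<in>{1..n}. X j \<le> X k \<or> Suc k \<le> X j"
    proof
      fix j assume j: "j \<in> {1..n}"
      show "X j \<le> X k \<or> Suc k \<le> X j"
      proof (cases "X j < Suc k")
        case True
        hence "j \<in> S" using j S_def by simp
        hence "j \<le> m" using Sm by simp
        hence "X j \<le> X m" using validX_mono[OF vX, of j m] Xm by simp
        then show ?thesis using eq cm S_def by simp
      qed simp
    qed
  next
    assume h: "\<forall>j\<in>{1..n}. X j \<le> X k \<or> Suc k \<le> X j"
    have "m \<in> {1..n}" using Xm km by simp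
    then have "X m \<le> X k" using h Xm by force
    then show "X (card {j\<in>{1..n}. X j < Suc k}) = X k" using Xkm cm S_def by simp
  qed
qed

lemma goodX_H:
  assumes vX: "validX n X" and g: "goodX n X" and k: "1 \<le> k" "k \<le> n"
    and nj: "X k = X (k-1)" and nv: "k \<notin> X`{1..n}"
  shows "sum_list (take k (sOf n X)) = 0"
proof (cases "k = n")
  case True then show ?thesis using H_n_zero[OF vX] by simp
next
  case False
  hence kn: "k < n" using k by simp
  have "X (card {j\<in>{1..n}. X j < Suc k}) = X k" using g nj nv k kn unfolding goodX_def by auto
  hence "\<forall>j\<in>{1..n}. X j \<le> X k \<or> Suc k \<le> X j" using key_F[OF vX k(1) kn] by simp
  hence "{v \<in> X`{1..n}. X k < v \<and> v \<le> k} = {}" by force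
  hence "card {v \<in> X`{1..n}. X k < v \<and> v \<le> k} = 0" by simp
  then show ?thesis using H_formula[OF vX k(2)] by simp
qed

lemma sOf_nth': "1 \<le> k \<Longrightarrow> k \<le> n \<Longrightarrow> sOf n X ! (k-1) = of_bool (k \<in> X ` {1..n}) - of_bool (X k \<noteq> X (k-1))"
  using sOf_nth[of "k-1" n X] by simp

lemma char_s:
  assumes vX: "validX n X" and g: "goodX n X" and k: "1 \<le> k" "k \<le> n"
  shows "(X k \<noteq> X (k-1)) \<longleftrightarrow> (sOf n X ! (k-1) = -1 \<or> (sOf n X ! (k-1) = 0 \<and> sum_list (take k (sOf n X)) \<ge> 1))"
    and "(k \<in> X`{1..n}) \<longleftrightarrow> (sOf n X ! (k-1) = 1 \<or> (sOf n X ! (k-1) = 0 \<and> sum_list (take k (sOf n X)) \<ge> 1))"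
proof -
  obtain s where sd: "s = sOf n X ! (k-1)" by simp
  obtain H where Hd: "H = sum_list (take k (sOf n X))" by simp
  obtain a where ad: "a = (k \<in> X ` {1..n})" by simp
  obtain b where bd: "b = (X k \<noteq> X (k-1))" by simp
  have sv: "s = of_bool a - of_bool b"
    unfolding sd ad bd using sOf_nth'[OF k] by simp
  have Hv: "H = int (card {v \<in> X`{1..n}. X k < v \<and> v \<le> k})"
    unfolding Hd using H_formula[OF vX k(2)] by simp
  have ab: "a \<and> b \<Longrightarrow> H \<ge> 1"
  proof -
    assume "a \<and> b"
    hence "k \<in> {v \<in> X`{1..n}. X k < v \<and> v \<le> k}" using ad validX_lt[OF vX k] by simp
    hence "0 < card {v \<in> X`{1..n}. X k < v \<and> v \<le> k}" by (subst card_gt_0_iff; auto)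
    then show "H \<ge> 1" using Hv by linarith
  qed
  have nab: "\<not> a \<and> \<not> b \<Longrightarrow> H = 0"
    unfolding Hd using goodX_H[OF vX g k] ad bd by simp
  have "(b \<longleftrightarrow> (s = -1 \<or> (s = 0 \<and> H \<ge> 1))) \<and> (a \<longleftrightarrow> (s = 1 \<or> (s = 0 \<and> H \<ge> 1)))"
    using ab nab sv by (cases a; cases b; simp)
  then have C1: "b \<longleftrightarrow> (s = -1 \<or> (s = 0 \<and> H \<ge> 1))" and C2: "a \<longleftrightarrow> (s = 1 \<or> (s = 0 \<and> H \<ge> 1))" by auto
  show "(X k \<noteq> X (k-1)) \<longleftrightarrow> (sOf n X ! (k-1) = -1 \<or> (sOf n X ! (k-1) = 0 \<and> sum_list (take k (sOf n X)) \<ge> 1))"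
    and "(k \<in> X`{1..n}) \<longleftrightarrow> (sOf n X ! (k-1) = 1 \<or> (sOf n X ! (k-1) = 0 \<and> sum_list (take k (sOf n X)) \<ge> 1))"
    using C1 C2 unfolding sd[symmetric] Hd[symmetric] ad[symmetric] bd[symmetric] by auto
qed


lemma V_lt: "validX n X \<Longrightarrow> v \<in> X`{1..n} \<Longrightarrow> v < n"
  using validX_lt by fastforce

lemma zero_in: "validX n X \<Longrightarrow> 1 \<le> n \<Longrightarrow> 0 \<in> X`{1..n}"
  using validX_lt[of n X 1] by (metis atLeastAtMost_iff image_eqI le_refl less_one)

lemma minV: assumes vX: "validX n X" and k: "k < n" and ne: "X (Suc k) \<noteq> X k"
  and w: "w \<in> X`{1..n}" and lt: "X k < w" shows "X (Suc k) \<le> w"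
proof -
  obtain j where j: "j \<in> {1..n}" "w = X j" using w by auto
  have "\<not> j \<le> k" using validX_mono[OF vX, of j k] k j lt by auto
  then show ?thesis using validX_mono[OF vX, of "Suc k" j] j by simp
qed

lemma X_unique:
  assumes vX: "validX n X" and vY: "validX n Y"
    and hj: "\<And>k. 1 \<le> k \<Longrightarrow> k \<le> n \<Longrightarrow> (X k \<noteq> X (k-1)) \<longleftrightarrow> (Y k \<noteq> Y (k-1))"
    and hv: "\<And>k. 1 \<le> k \<Longrightarrow> k \<le> n \<Longrightarrow> (k \<in> X`{1..n}) \<longleftrightarrow> (k \<in> Y`{1..n})"
  shows "k \<le> n \<Longrightarrow> X k = Y k"
proof -
  have sub: "A`{1..n} \<subseteq> B`{1..n}" if vA: "validX n A" and vB: "validX n B"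
     and h: "\<And>k. 1 \<le> k \<Longrightarrow> k \<le> n \<Longrightarrow> (k \<in> A`{1..n}) \<longleftrightarrow> (k \<in> B`{1..n})" for A B
  proof
    fix v assume v: "v \<in> A`{1..n}"
    have vn: "v < n" using V_lt[OF vA v] .
    show "v \<in> B`{1..n}"
    proof (cases "v = 0")
      case True then show ?thesis using zero_in[OF vB] vn by simp
    next
      case False then show ?thesis using h[of v] v vn by simp
    qed
  qed
  have VV: "X`{1..n} = Y`{1..n}" using sub[OF vX vY] sub[OF vY vX] hv by blast
  show "k \<le> n \<Longrightarrow> X k = Y k"
  proof (induction k)
    case 0 then show ?case using validX_0[OF vX] validX_0[OF vY] by simp
  next
    case (Suc k)
    have kn: "k < n" using Suc by simp
    have IH: "X k = Y k" using Suc by simp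
    show ?case
    proof (cases "X (Suc k) = X k")
      case True
      then have "Y (Suc k) = Y k" using hj[of "Suc k"] kn by simp
      then show ?thesis using True IH by simp
    next
      case False
      then have F2: "Y (Suc k) \<noteq> Y k" using hj[of "Suc k"] kn by simp
      have x1: "X k < X (Suc k)" using False validX_mono[OF vX, of k "Suc k"] kn by simp
      have y1: "Y k < Y (Suc k)" using F2 validX_mono[OF vY, of k "Suc k"] kn by simp
      have xin: "X (Suc k) \<in> Y`{1..n}" using VV kn by auto
      have yin: "Y (Suc k) \<in> X`{1..n}" using VV kn by auto
      have "Y (Suc k) \<le> X (Suc k)" using minV[OF vY kn F2 xin] x1 IH by simp
      moreover have "X (Suc k) \<le> Y (Suc k)" using minV[OF vX kn False yin] y1 IH by simp
      ultimately show ?thesis by simp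
    qed
  qed
qed

lemma sOf_inj:
  assumes vX: "validX n X" and vY: "validX n Y" and gX: "goodX n X" and gY: "goodX n Y"
    and eq: "sOf n X = sOf n Y"
  shows "k \<le> n \<Longrightarrow> X k = Y k"
proof (rule X_unique[OF vX vY])
  fix k assume k: "1 \<le> k" "k \<le> n"
  show "(X k \<noteq> X (k-1)) \<longleftrightarrow> (Y k \<noteq> Y (k-1))"
    using char_s(1)[OF vX gX k] char_s(1)[OF vY gY k] eq by simp
  show "(k \<in> X`{1..n}) \<longleftrightarrow> (k \<in> Y`{1..n})"
    using char_s(2)[OF vX gX k] char_s(2)[OF vY gY k] eq by simp
qed

lemma riordan_iff:
  assumes vX: "validX n X" and gX: "goodX n X"
  shows "riordan_path n (sOf n X) \<longleftrightarrow> (\<forall>k. 1 \<le> k \<longrightarrow> k \<le> n \<longrightarrow> X k = X (k-1) \<longrightarrow> k < n \<and> k \<in> X`{1..n})"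
proof -
  have Hk: "sum_list (take (k-1) (sOf n X)) = sum_list (take k (sOf n X)) - sOf n X ! (k-1)"
    if "1 \<le> k" "k \<le> n" for k
  proof -
    have "take k (sOf n X) = take (k-1) (sOf n X) @ [sOf n X ! (k-1)]"
      using that take_Suc_conv_app_nth[of "k-1" "sOf n X"] by simp
    then show ?thesis by simp
  qed
  show ?thesis
  proof
    assume r: "riordan_path n (sOf n X)"
    show "\<forall>k. 1 \<le> k \<longrightarrow> k \<le> n \<longrightarrow> X k = X (k-1) \<longrightarrow> k < n \<and> k \<in> X`{1..n}"
    proof (intro allI impI)
      fix k assume k: "1 \<le> k" "k \<le> n" and e: "X k = X (k-1)"
      have kV: "k \<in> X`{1..n}"
      proof (rule ccontr)
        assume nv: "k \<notin> X`{1..n}"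
        have s0: "sOf n X ! (k-1) = 0" using sOf_nth'[OF k, of X] nv e by simp
        have "sum_list (take k (sOf n X)) = 0" using goodX_H[OF vX gX k e nv] .
        hence "sum_list (take (k-1) (sOf n X)) = 0" using Hk[OF k] s0 by simp
        moreover have "k - 1 < n" using k by simp
        ultimately show False using r s0 unfolding riordan_path_def by blast
      qed
      then show "k < n \<and> k \<in> X`{1..n}" using V_lt[OF vX kV] by simp
    qed
  next
    assume h: "\<forall>k. 1 \<le> k \<longrightarrow> k \<le> n \<longrightarrow> X k = X (k-1) \<longrightarrow> k < n \<and> k \<in> X`{1..n}"
    have "\<forall>i<n. sOf n X ! i = 0 \<longrightarrow> sum_list (take i (sOf n X)) \<noteq> 0"
    proof (intro allI impI)
      fix i assume i: "i < n" and s0: "sOf n X ! i = 0"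
      define k where "k = Suc i"
      have k: "1 \<le> k" "k \<le> n" using i k_def by auto
      have s0': "sOf n X ! (k-1) = 0" using s0 k_def by simp
      show "sum_list (take i (sOf n X)) \<noteq> 0"
      proof
        assume H0: "sum_list (take i (sOf n X)) = 0"
        hence H0': "sum_list (take k (sOf n X)) = 0" using Hk[OF k] s0' k_def by simp
        show False
        proof (cases "X k = X (k-1)")
          case True
          hence "k \<in> X`{1..n}" using h k by blast
          then show False using sOf_nth'[OF k, of X] True s0' by simp
        next
          case False
          then show False using char_s(1)[OF vX gX k] s0' H0' by simp
        qed
      qed
    qed
    then show "riordan_path n (sOf n X)" unfolding riordan_path_def using motzkin_sOf[OF vX] by simp
  qed
qed



lemma card_less_nth:
  assumes ss: "sorted_wrt (<) (xs::nat list)" and m: "m < length xs"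
  shows "card {a \<in> set xs. a < xs!m} = m"
proof -
  have "{a \<in> set xs. a < xs!m} = set (take m xs)"
  proof (rule set_eqI)
    fix a
    show "a \<in> {a \<in> set xs. a < xs!m} \<longleftrightarrow> a \<in> set (take m xs)"
    proof
      assume a: "a \<in> {a \<in> set xs. a < xs!m}"
      then obtain i where i: "i < length xs" "a = xs!i" by (auto simp: in_set_conv_nth)
      have "i < m"
      proof (rule ccontr)
        assume "\<not> i < m"
        hence "m \<le> i" by simp
        then have "xs!m \<le> xs!i"
          using sorted_nth_mono[OF strict_sorted_imp_sorted[OF ss]] i by simp
        then show False using a i by simp
      qed
      then show "a \<in> set (take m xs)" using i by (auto simp: in_set_conv_nth)
    next
      assume "a \<in> set (take m xs)"
      then obtain i where i: "i < m" "a = xs!i" using m by (auto simp: in_set_conv_nth)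
      have "xs!i < xs!m" using sorted_wrt_nth_less[OF ss i(1) m] .
      then show "a \<in> {a \<in> set xs. a < xs!m}" using i m by auto
    qed
  qed
  moreover have "distinct xs" using ss strict_sorted_iff by blast
  ultimately show ?thesis using m by (simp add: distinct_card)
qed

lemma nth_less_iff:
  assumes ss: "sorted_wrt (<) (xs::nat list)" and m: "m < length xs"
  shows "xs!m < k \<longleftrightarrow> m < card {a \<in> set xs. a < k}"
proof
  assume lt: "xs!m < k"
  have sub: "{a \<in> set xs. a < xs!m} \<subseteq> {a \<in> set xs. a < k}" using lt by auto
  have "xs!m \<in> {a \<in> set xs. a < k}" "xs!m \<notin> {a \<in> set xs. a < xs!m}" using lt m by auto
  then have "{a \<in> set xs. a < xs!m} \<subset> {a \<in> set xs. a < k}" using sub by blast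
  then have "card {a \<in> set xs. a < xs!m} < card {a \<in> set xs. a < k}"
    by (simp add: psubset_card_mono)
  then show "m < card {a \<in> set xs. a < k}" using card_less_nth[OF ss m] by simp
next
  assume h: "m < card {a \<in> set xs. a < k}"
  show "xs!m < k"
  proof (rule ccontr)
    assume "\<not> xs!m < k"
    then have "{a \<in> set xs. a < k} \<subseteq> {a \<in> set xs. a < xs!m}" by auto
    then have "card {a \<in> set xs. a < k} \<le> card {a \<in> set xs. a < xs!m}"
      by (simp add: card_mono)
    then show False using card_less_nth[OF ss m] h by simp
  qed
qed

definition Hs :: "int list \<Rightarrow> nat \<Rightarrow> int" where "Hs s k = sum_list (take k s)"
definition inVs :: "int list \<Rightarrow> nat \<Rightarrow> bool" where
  "inVs s k = (s!(k-1) = 1 \<or> (s!(k-1) = 0 \<and> Hs s k \<ge> 1))"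
definition jmps :: "int list \<Rightarrow> nat \<Rightarrow> bool" where
  "jmps s k = (s!(k-1) = -1 \<or> (s!(k-1) = 0 \<and> Hs s k \<ge> 1))"
definition Vs :: "nat \<Rightarrow> int list \<Rightarrow> nat set" where "Vs n s = insert 0 {k\<in>{1..n}. inVs s k}"
definition Js :: "int list \<Rightarrow> nat \<Rightarrow> nat" where "Js s k = card {i\<in>{1..k}. jmps s i}"
definition cI :: "int list \<Rightarrow> nat \<Rightarrow> nat" where "cI s k = card {i\<in>{1..k}. inVs s i}"
definition Xs :: "nat \<Rightarrow> int list \<Rightarrow> nat \<Rightarrow> nat" where
  "Xs n s k = (if k \<le> n then sorted_list_of_set (Vs n s) ! Js s k else 0)"

context
  fixes n :: nat and s :: "int list"
  assumes mz: "motzkin_path n s" and n1: "1 \<le> n"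
begin

lemma len_s: "length s = n" using mz unfolding motzkin_path_def by simp

lemma M1: "1 \<le> k \<Longrightarrow> k \<le> n \<Longrightarrow> s!(k-1) \<in> {-1,0,1}"
proof -
  assume k: "1 \<le> k" "k \<le> n"
  have "s!(k-1) \<in> set s" using k len_s by (intro nth_mem) simp
  then show ?thesis using mz unfolding motzkin_path_def by blast
qed

lemma M2: "1 \<le> k \<Longrightarrow> k \<le> n \<Longrightarrow> Hs s k = Hs s (k-1) + s!(k-1)"
proof -
  assume k: "1 \<le> k" "k \<le> n"
  have "take k s = take (k-1) s @ [s!(k-1)]"
    using k len_s take_Suc_conv_app_nth[of "k-1" s] by simp
  then show ?thesis unfolding Hs_def by simp
qed

lemma M3: "k \<le> n \<Longrightarrow> Hs s k \<ge> 0"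
  using mz unfolding motzkin_path_def Hs_def by simp

lemma Hn: "Hs s n = 0"
  using mz len_s unfolding motzkin_path_def Hs_def by simp

lemma M4: "1 \<le> k \<Longrightarrow> k \<le> n \<Longrightarrow> s!(k-1) = of_bool (inVs s k) - of_bool (jmps s k)"
  using M1 unfolding inVs_def jmps_def by auto

lemma M5a: "1 \<le> k \<Longrightarrow> k \<le> n \<Longrightarrow> inVs s k \<Longrightarrow> Hs s k \<ge> 1"
  using M2 M3[of "k-1"] unfolding inVs_def by auto

lemma M9: "\<not> jmps s 1"
proof
  assume j: "jmps s 1"
  have "Hs s 1 = s!0" using M2[of 1] n1 unfolding Hs_def by simp
  moreover have "Hs s 1 \<ge> 0" using M3[of 1] n1 by simp
  ultimately show False using j unfolding jmps_def by auto
qed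

lemma Js_Suc: "Js s (Suc k) = Js s k + of_bool (jmps s (Suc k))"
proof -
  have "{i\<in>{1..Suc k}. jmps s i} = {i\<in>{1..k}. jmps s i} \<union> (if jmps s (Suc k) then {Suc k} else {})"
    by (cases "jmps s (Suc k)") (auto simp: le_Suc_eq)
  then show ?thesis unfolding Js_def by (simp add: card_Un_disjoint)
qed

lemma cI_Suc: "cI s (Suc k) = cI s k + of_bool (inVs s (Suc k))"
proof -
  have "{i\<in>{1..Suc k}. inVs s i} = {i\<in>{1..k}. inVs s i} \<union> (if inVs s (Suc k) then {Suc k} else {})"
    by (cases "inVs s (Suc k)") (auto simp: le_Suc_eq)
  then show ?thesis unfolding cI_def by (simp add: card_Un_disjoint)
qed

lemma M6: "k \<le> n \<Longrightarrow> Hs s k = int (cI s k) - int (Js s k)"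
proof (induction k)
  case 0 then show ?case by (simp add: Hs_def cI_def Js_def)
next
  case (Suc k)
  have "Hs s (Suc k) = Hs s k + s!k" using M2[of "Suc k"] Suc by simp
  also have "s!k = of_bool (inVs s (Suc k)) - of_bool (jmps s (Suc k))" using M4[of "Suc k"] Suc by simp
  finally show ?case using Suc Js_Suc[of k] cI_Suc[of k] by simp
qed

lemma M7: "1 \<le> k \<Longrightarrow> k \<le> n \<Longrightarrow> Js s k \<le> cI s (k-1)"
proof -
  assume k: "1 \<le> k" "k \<le> n"
  have c: "cI s k = cI s (k-1) + of_bool (inVs s k)" using cI_Suc[of "k-1"] k by simp
  have "of_bool (inVs s k) \<le> Hs s k" using M5a[OF k] M3[OF k(2)] by (cases "inVs s k") auto
  then show ?thesis using M6[OF k(2)] c by simp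
qed

lemma Jn: "Js s n = cI s n" using M6[of n] Hn by simp

lemma Js_mono: "j \<le> k \<Longrightarrow> Js s j \<le> Js s k"
  unfolding Js_def by (rule card_mono) auto

lemma finVs: "finite (Vs n s)" unfolding Vs_def by simp

lemma card_Vs: "card (Vs n s) = Suc (cI s n)"
  unfolding Vs_def cI_def by simp

lemma card_Vs_less: "1 \<le> k \<Longrightarrow> k \<le> Suc n \<Longrightarrow> card {a \<in> Vs n s. a < k} = Suc (cI s (k-1))"
proof -
  assume k: "1 \<le> k" "k \<le> Suc n"
  have "{a \<in> Vs n s. a < k} = insert 0 {i\<in>{1..k-1}. inVs s i}"
    unfolding Vs_def using k by auto
  then show ?thesis unfolding cI_def by simp
qed

abbreviation "L \<equiv> sorted_list_of_set (Vs n s)"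

lemma L_ss: "sorted_wrt (<) L" using finVs by simp
lemma L_set: "set L = Vs n s" using finVs by simp
lemma L_len: "length L = Suc (cI s n)" using finVs card_Vs by simp

lemma cI_mono: "j \<le> k \<Longrightarrow> cI s j \<le> cI s k"
  unfolding cI_def by (rule card_mono) auto

lemma Js_lt: assumes kn: "k \<le> n" shows "Js s k < length L"
proof (cases "k = 0")
  case True then show ?thesis using L_len by (simp add: Js_def)
next
  case False
  then have "Js s k \<le> cI s (k-1)" using M7[of k] kn by simp
  also have "\<dots> \<le> cI s n" using cI_mono[of "k-1" n] kn by simp
  finally show ?thesis using L_len by simp
qed

lemma Xs_lt: "1 \<le> k \<Longrightarrow> k \<le> n \<Longrightarrow> Xs n s k < k"
proof -
  assume k: "1 \<le> k" "k \<le> n"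
  have "Js s k < card {a \<in> set L. a < k}"
    using M7[OF k] card_Vs_less[of k] k L_set by simp
  then show ?thesis unfolding Xs_def using nth_less_iff[OF L_ss Js_lt[OF k(2)]] k by simp
qed

lemma Xs_mono: "j \<le> k \<Longrightarrow> k \<le> n \<Longrightarrow> Xs n s j \<le> Xs n s k"
  unfolding Xs_def using sorted_nth_mono[OF strict_sorted_imp_sorted[OF L_ss] Js_mono[of j k] Js_lt[of k]]
  by simp

lemma Xs0: "Xs n s 0 = 0"
proof -
  have "0 \<in> set L" using L_set Vs_def by simp
  then obtain i where i: "i < length L" "L!i = 0" by (auto simp: in_set_conv_nth)
  have "L!0 \<le> L!i" using sorted_nth_mono[OF strict_sorted_imp_sorted[OF L_ss], of 0 i] i by simp
  then show ?thesis unfolding Xs_def Js_def using i by simp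
qed

lemma valid_Xs: "validX n (Xs n s)"
  unfolding validX_def using Xs0 Xs_lt Xs_mono by auto

lemma IVT_Js: "m \<le> Js s k \<Longrightarrow> 1 \<le> k \<Longrightarrow> \<exists>i\<in>{1..k}. Js s i = m"
proof (induction k)
  case 0 then show ?case by simp
next
  case (Suc k)
  show ?case
  proof (cases "m \<le> Js s k \<and> 1 \<le> k")
    case True then show ?thesis using Suc.IH by force
  next
    case False
    show ?thesis
    proof (cases "k = 0")
      case True
      then have "Js s (Suc k) = 0" using M9 Js_Suc[of 0] by (simp add: Js_def)
      then show ?thesis using Suc.prems True by auto
    next
      case False2: False
      then have "Js s k < m" using False by simp
      then have "Js s (Suc k) = m" using Suc.prems Js_Suc[of k] by (cases "jmps s (Suc k)") auto
      then show ?thesis by auto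
    qed
  qed
qed

lemma range_Xs: "Xs n s ` {1..n} = Vs n s"
proof
  show "Xs n s ` {1..n} \<subseteq> Vs n s"
    unfolding Xs_def using Js_lt L_set by (auto intro: nth_mem)
next
  show "Vs n s \<subseteq> Xs n s ` {1..n}"
  proof
    fix v assume "v \<in> Vs n s"
    then obtain m where m: "m < length L" "v = L!m" using L_set by (metis in_set_conv_nth)
    then have "m \<le> Js s n" using L_len Jn by simp
    then obtain i where i: "i \<in> {1..n}" "Js s i = m" using IVT_Js[of m n] n1 by auto
    then show "v \<in> Xs n s ` {1..n}" unfolding Xs_def using m by force
  qed
qed

lemma jump_Xs: "1 \<le> k \<Longrightarrow> k \<le> n \<Longrightarrow> (Xs n s k \<noteq> Xs n s (k-1)) \<longleftrightarrow> jmps s k"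
proof -
  assume k: "1 \<le> k" "k \<le> n"
  have J: "Js s k = Js s (k-1) + of_bool (jmps s k)" using Js_Suc[of "k-1"] k by simp
  have d: "distinct L" using L_ss strict_sorted_iff by blast
  have l1: "Js s k < length L" "Js s (k-1) < length L" using Js_lt k by auto
  have "(L ! Js s k \<noteq> L ! Js s (k-1)) \<longleftrightarrow> Js s k \<noteq> Js s (k-1)"
    using nth_eq_iff_index_eq[OF d l1] by simp
  moreover have "Xs n s k = L ! Js s k" "Xs n s (k-1) = L ! Js s (k-1)" unfolding Xs_def using k by auto
  ultimately show ?thesis using J by simp
qed

lemma sOf_Xs: "sOf n (Xs n s) = s"
proof (rule nth_equalityI)
  show "length (sOf n (Xs n s)) = length s" using len_s by simp
next
  fix i assume "i < length (sOf n (Xs n s))"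
  then have i: "i < n" by simp
  have k: "1 \<le> Suc i" "Suc i \<le> n" using i by auto
  have "sOf n (Xs n s) ! i = of_bool (Suc i \<in> Vs n s) - of_bool (jmps s (Suc i))"
    using sOf_nth[OF i, of "Xs n s"] range_Xs jump_Xs[OF k] by simp
  also have "Suc i \<in> Vs n s \<longleftrightarrow> inVs s (Suc i)" unfolding Vs_def using i by auto
  finally show "sOf n (Xs n s) ! i = s ! i" using M4[OF k] by simp
qed

lemma good_Xs: "goodX n (Xs n s)"
  unfolding goodX_def
proof (intro allI impI)
  fix k assume k1: "1 \<le> k" and kn: "k < n" and e: "Xs n s k = Xs n s (k-1)"
    and nv: "k \<notin> Xs n s ` {1..n}"
  have k: "1 \<le> k" "k \<le> n" using k1 kn by auto
  have nj: "\<not> jmps s k" using jump_Xs[OF k] e by simp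
  have ni: "\<not> inVs s k" using nv range_Xs Vs_def k by auto
  have s0: "s!(k-1) = 0" using M4[OF k] nj ni by simp
  have "Hs s k = 0" using ni s0 M3[OF k(2)] unfolding inVs_def by simp
  then have "int (card {v \<in> Xs n s`{1..n}. Xs n s k < v \<and> v \<le> k}) = 0"
    using H_formula[OF valid_Xs k(2)] sOf_Xs unfolding Hs_def by simp
  then have "{v \<in> Xs n s`{1..n}. Xs n s k < v \<and> v \<le> k} = {}" by simp
  then have "\<forall>j\<in>{1..n}. Xs n s j \<le> Xs n s k \<or> Suc k \<le> Xs n s j"
  proof (intro ballI)
    fix j assume j: "j \<in> {1..n}"
    assume em: "{v \<in> Xs n s`{1..n}. Xs n s k < v \<and> v \<le> k} = {}"
    have "Xs n s j \<in> Xs n s ` {1..n}" using j by blast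
    then have "\<not> (Xs n s k < Xs n s j \<and> Xs n s j \<le> k)" using em by blast
    then show "Xs n s j \<le> Xs n s k \<or> Suc k \<le> Xs n s j" by auto
  qed
  then show "Xs n s (card {j\<in>{1..n}. Xs n s j < Suc k}) = Xs n s k"
    by (rule key_F[OF valid_Xs k1 kn, THEN iffD2])
qed

end



lemma len_filter_take:
  "length (filter Q (take m p)) = card {i. i < m \<and> i < length p \<and> Q (p!i)}"
proof -
  have "length (filter Q (take m p)) = card {i. i < length (take m p) \<and> Q (take m p ! i)}"
    by (rule length_filter_conv_card)
  also have "{i. i < length (take m p) \<and> Q (take m p ! i)} = {i. i < m \<and> i < length p \<and> Q (p!i)}"
    by auto
  finally show ?thesis .
qed

lemma len_filter_take_mono: "a \<le> b \<Longrightarrow> length (filter Q (take a p)) \<le> length (filter Q (take b p))"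
  unfolding len_filter_take by (rule card_mono) auto

lemma TF_sum: "length (filter id (take m p)) + length (filter Not (take m p)) = min m (length p)"
  using sum_length_filter_compl[of id "take m p"] by simp

lemma idx_props:
  fixes Q :: "bool \<Rightarrow> bool" and p :: "bool list" and j :: nat
  defines "ix \<equiv> filter (\<lambda>i. Q (p!i)) [0..<length p]"
  assumes j: "j < length ix"
  shows "ix!j < length p" "Q (p!(ix!j))" "length (filter Q (take (ix!j) p)) = j"
proof -
  have ss: "sorted_wrt (<) ix" unfolding ix_def by (rule sorted_wrt_filter) simp
  have "ix!j \<in> set ix" using j by simp
  then show a: "ix!j < length p" and b: "Q (p!(ix!j))" unfolding ix_def by auto
  have "length (filter Q (take (ix!j) p)) = card {i. i < ix!j \<and> i < length p \<and> Q (p!i)}"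
    by (rule len_filter_take)
  also have "{i. i < ix!j \<and> i < length p \<and> Q (p!i)} = {a \<in> set ix. a < ix!j}"
    unfolding ix_def by auto
  also have "card \<dots> = j" using card_less_nth[OF ss j] .
  finally show "length (filter Q (take (ix!j) p)) = j" .
qed

lemma length_idx: "length (filter (\<lambda>i. Q (p!i)) [0..<length p]) = length (filter Q p)"
proof -
  have "length (filter (\<lambda>i. Q (p!i)) [0..<length p]) = card {i. i < length p \<and> Q (p!i)}"
    by (simp add: length_filter_conv_card cong: conj_cong)
  also have "\<dots> = length (filter Q p)" by (simp add: length_filter_conv_card)
  finally show ?thesis .
qed

lemma north_props:
  assumes "j < length (filter id p)"
  shows "north_idx p ! j < length p" "p!(north_idx p ! j)" "length (filter id (take (north_idx p ! j) p)) = j"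
  using idx_props[of j id p] assms length_idx[of id p] unfolding north_idx_def by auto

lemma east_props:
  assumes "j < length (filter Not p)"
  shows "east_idx p ! j < length p" "\<not> p!(east_idx p ! j)" "length (filter Not (take (east_idx p ! j) p)) = j"
  using idx_props[of j Not p] assms length_idx[of Not p] unfolding east_idx_def by auto

lemma length_north: "length (north_idx p) = length (filter id p)"
  unfolding north_idx_def using length_idx[of id p] by simp

definition Xf :: "nat \<Rightarrow> bool list \<Rightarrow> nat \<Rightarrow> nat" where
  "Xf n p k = (if k = 0 \<or> n < k then 0 else xcoord p k)"

definition decode :: "nat \<Rightarrow> (nat \<Rightarrow> nat) \<Rightarrow> bool list" where
  "decode n X = map (\<lambda>i. \<exists>k\<in>{1..n}. i = X k + k - 1) [0..<2*n]"

lemma xcoord_pos: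
  assumes k: "1 \<le> k" "k \<le> length (filter id p)"
  shows "north_idx p ! (k-1) = xcoord p k + (k - 1)"
proof -
  have j: "k - 1 < length (filter id p)" using k by simp
  note np = north_props[OF j]
  have "length (filter id (take (north_idx p ! (k-1)) p)) + length (filter Not (take (north_idx p ! (k-1)) p))
     = north_idx p ! (k-1)" using TF_sum[of "north_idx p ! (k-1)" p] np(1) by simp
  then show ?thesis using np(3) unfolding xcoord_def by simp
qed

lemma dyck_decode:
  assumes d: "dyck_path n p"
  shows "p = decode n (Xf n p)" and "validX n (Xf n p)"
proof -
  have lp: "length p = 2*n" and nT: "length (filter id p) = n" using d unfolding dyck_path_def by auto
  have pos: "north_idx p ! (k-1) = Xf n p k + (k-1)" if "1 \<le> k" "k \<le> n" for k
    using xcoord_pos[of k p] that nT unfolding Xf_def by simp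
  show "p = decode n (Xf n p)"
  proof (rule nth_equalityI)
    show "length p = length (decode n (Xf n p))" using lp by (simp add: decode_def)
  next
    fix i assume i: "i < length p"
    have "p!i \<longleftrightarrow> i \<in> set (north_idx p)" unfolding north_idx_def using i by simp
    also have "\<dots> \<longleftrightarrow> (\<exists>j<n. i = north_idx p ! j)" using length_north[of p] nT by (auto simp: in_set_conv_nth)
    also have "\<dots> \<longleftrightarrow> (\<exists>k\<in>{1..n}. i = Xf n p k + k - 1)"
    proof
      assume "\<exists>j<n. i = north_idx p ! j"
      then obtain j where "j < n" "i = north_idx p ! j" by auto
      then show "\<exists>k\<in>{1..n}. i = Xf n p k + k - 1" using pos[of "Suc j"] by (intro bexI[of _ "Suc j"]) auto
    next
      assume "\<exists>k\<in>{1..n}. i = Xf n p k + k - 1"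
      then obtain k where "k \<in> {1..n}" "i = Xf n p k + k - 1" by auto
      then show "\<exists>j<n. i = north_idx p ! j" using pos[of k] by (intro exI[of _ "k-1"]) auto
    qed
    finally show "p!i = decode n (Xf n p) ! i" using i lp by (simp add: decode_def)
  qed
  show "validX n (Xf n p)" unfolding validX_def
  proof (intro conjI allI impI)
    show "Xf n p 0 = 0" by (simp add: Xf_def)
  next
    fix k assume k: "1 \<le> k" "k \<le> n"
    have j: "k - 1 < length (filter id p)" using k nT by simp
    note np = north_props[OF j]
    have "length (filter Not (take (north_idx p ! (k-1)) p)) \<le> length (filter id (take (north_idx p ! (k-1)) p))"
      using d np(1) unfolding dyck_path_def by simp
    then show "Xf n p k < k" using np(3) k unfolding Xf_def xcoord_def by simp
  next
    fix j k assume jk: "j \<le> k" "k \<le> n"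
    show "Xf n p j \<le> Xf n p k"
    proof (cases "j = 0")
      case True then show ?thesis by (simp add: Xf_def)
    next
      case False
      have "sorted_wrt (<) (north_idx p)" unfolding north_idx_def by (rule sorted_wrt_filter) simp
      then have ss: "sorted (north_idx p)" by (rule strict_sorted_imp_sorted)
      have "north_idx p ! (j-1) \<le> north_idx p ! (k-1)"
        using sorted_nth_mono[OF ss, of "j-1" "k-1"] jk length_north[of p] nT False by simp
      then have "length (filter Not (take (north_idx p ! (j-1)) p)) \<le> length (filter Not (take (north_idx p ! (k-1)) p))"
        by (rule len_filter_take_mono)
      then show ?thesis using jk False unfolding Xf_def xcoord_def by simp
    qed
  qed
qed



context
  fixes n :: nat and X :: "nat \<Rightarrow> nat"
  assumes vX: "validX n X"
begin

abbreviation "pd \<equiv> decode n X"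

lemma P_mono: "1 \<le> j \<Longrightarrow> j < k \<Longrightarrow> k \<le> n \<Longrightarrow> X j + j - 1 < X k + k - 1"
  using validX_mono[OF vX, of j k] by simp

lemma P_mono_iff: "1 \<le> j \<Longrightarrow> j \<le> n \<Longrightarrow> 1 \<le> k \<Longrightarrow> k \<le> n \<Longrightarrow> X j + j - 1 < X k + k - 1 \<longleftrightarrow> j < k"
  using P_mono[of j k] P_mono[of k j] by (cases "j < k"; cases "k < j") auto

lemma P_inj: "inj_on (\<lambda>k. X k + k - 1) {1..n}"
  unfolding inj_on_def using P_mono_iff by (metis atLeastAtMost_iff less_irrefl_nat nat_neq_iff)

lemma below_iff: "1 \<le> k \<Longrightarrow> k \<le> n \<Longrightarrow> 1 \<le> j \<Longrightarrow> j \<le> n \<Longrightarrow> X k + k - 1 < X j + j \<longleftrightarrow> k \<le> j"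
proof -
  assume a: "1 \<le> k" "k \<le> n" "1 \<le> j" "j \<le> n"
  have "X k + k - 1 < X j + j \<longleftrightarrow> \<not> (X j + j - 1 < X k + k - 1)" using a by linarith
  also have "\<dots> \<longleftrightarrow> \<not> (j < k)" using P_mono_iff[of j k] a by simp
  finally show ?thesis by (simp add: not_less)
qed

lemma below_set: "1 \<le> j \<Longrightarrow> j \<le> n \<Longrightarrow> {k\<in>{1..n}. X k + k - 1 < X j + j} = {1..j}"
proof (rule set_eqI)
  fix k assume j: "1 \<le> j" "j \<le> n"
  show "k \<in> {k\<in>{1..n}. X k + k - 1 < X j + j} \<longleftrightarrow> k \<in> {1..j}"
  proof (cases "1 \<le> k \<and> k \<le> n")
    case True then show ?thesis using below_iff[of k j] j by auto
  next
    case False then show ?thesis using j by auto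
  qed
qed

lemma P_bound: "1 \<le> k \<Longrightarrow> k \<le> n \<Longrightarrow> X k + k - 1 < 2*n"
  using validX_lt[OF vX, of k] by simp

lemma dec_len[simp]: "length pd = 2*n" by (simp add: decode_def)

lemma dec_nth: "i < 2*n \<Longrightarrow> pd ! i \<longleftrightarrow> (\<exists>k\<in>{1..n}. i = X k + k - 1)"
  by (simp add: decode_def)

lemma cntT: "length (filter id (take m pd)) = card {k\<in>{1..n}. X k + k - 1 < m}"
proof -
  have "length (filter id (take m pd)) = card {i. i < m \<and> i < length pd \<and> id (pd!i)}"
    by (rule len_filter_take)
  also have "{i. i < m \<and> i < length pd \<and> id (pd!i)} = (\<lambda>k. X k + k - 1) ` {k\<in>{1..n}. X k + k - 1 < m}"
  proof (rule set_eqI)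
    fix i
    show "i \<in> {i. i < m \<and> i < length pd \<and> id (pd!i)} \<longleftrightarrow> i \<in> (\<lambda>k. X k + k - 1) ` {k\<in>{1..n}. X k + k - 1 < m}"
    proof
      assume "i \<in> {i. i < m \<and> i < length pd \<and> id (pd!i)}"
      then obtain k where "k \<in> {1..n}" "i = X k + k - 1" "i < m" using dec_nth by auto
      then show "i \<in> (\<lambda>k. X k + k - 1) ` {k\<in>{1..n}. X k + k - 1 < m}" by auto
    next
      assume "i \<in> (\<lambda>k. X k + k - 1) ` {k\<in>{1..n}. X k + k - 1 < m}"
      then obtain k where k: "k \<in> {1..n}" "i = X k + k - 1" "i < m" by auto
      then have "i < 2*n" using P_bound[of k] by simp
      then show "i \<in> {i. i < m \<and> i < length pd \<and> id (pd!i)}" using k dec_nth[of i] by auto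
    qed
  qed
  also have "card \<dots> = card {k\<in>{1..n}. X k + k - 1 < m}"
    by (rule card_image) (rule inj_on_subset[OF P_inj], auto)
  finally show ?thesis .
qed

lemma card_below: "1 \<le> j \<Longrightarrow> j \<le> n \<Longrightarrow> card {k\<in>{1..n}. X k + k - 1 < X j + j - 1} = j - 1"
proof -
  assume j: "1 \<le> j" "j \<le> n"
  have "{k\<in>{1..n}. X k + k - 1 < X j + j - 1} = {1..j-1}"
    using P_mono_iff[of _ j] j by auto
  then show ?thesis by simp
qed

lemma nT: "length (filter id pd) = n"
proof -
  have "length (filter id pd) = length (filter id (take (2*n) pd))" by simp
  also have "\<dots> = card {k\<in>{1..n}. X k + k - 1 < 2*n}" by (rule cntT)
  also have "{k\<in>{1..n}. X k + k - 1 < 2*n} = {1..n}" using P_bound by auto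
  finally show ?thesis by (simp add: id_def)
qed

lemma north_dec: "1 \<le> k \<Longrightarrow> k \<le> n \<Longrightarrow> north_idx pd ! (k-1) = X k + k - 1"
proof -
  assume k: "1 \<le> k" "k \<le> n"
  have j: "k-1 < length (filter id pd)" using nT k by simp
  note np = north_props[OF j]
  obtain j where jj: "j \<in> {1..n}" "north_idx pd ! (k-1) = X j + j - 1"
    using np(1,2) dec_nth by auto
  have "j - 1 = k - 1" using np(3) jj cntT card_below[of j] by simp
  moreover have "1 \<le> j" using jj by simp
  ultimately have "j = k" using k by linarith
  then show ?thesis using jj by simp
qed

lemma xcoord_dec: "1 \<le> k \<Longrightarrow> k \<le> n \<Longrightarrow> xcoord pd k = X k"
  using xcoord_pos[of k pd] nT north_dec[of k] by simp

lemma dyck_dec: "dyck_path n pd"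
  unfolding dyck_path_def
proof (intro conjI allI impI)
  show "length pd = 2*n" by simp
  show "length (filter id pd) = n" by (rule nT)
next
  fix i assume i: "i \<le> length pd"
  define c where "c = length (filter id (take i pd))"
  have sum: "c + length (filter Not (take i pd)) = i" using TF_sum[of i pd] i c_def by simp
  have cle: "c \<le> n"
  proof -
    have "c \<le> length (filter id (take (2*n) pd))" using i c_def len_filter_take_mono[of i "2*n" id pd] by simp
    then show ?thesis using nT by simp
  qed
  define m where "m = min n ((i+1) div 2)"
  have "{1..m} \<subseteq> {k\<in>{1..n}. X k + k - 1 < i}"
  proof
    fix k assume k: "k \<in> {1..m}"
    then have "X k < k" using validX_lt[OF vX, of k] m_def by simp
    then show "k \<in> {k\<in>{1..n}. X k + k - 1 < i}" using k m_def by auto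
  qed
  then have "m \<le> c" unfolding c_def cntT using card_mono[of "{k\<in>{1..n}. X k + k - 1 < i}" "{1..m}"] by simp
  moreover have "i \<le> 2 * ((i+1) div 2)" by presburger
  moreover have "i \<le> 2 * n" using i by simp
  ultimately show "length (filter Not (take i pd)) \<le> length (filter id (take i pd))"
    using sum cle unfolding m_def c_def[symmetric] by (cases "n \<le> (i+1) div 2") (simp_all add: min_def)
qed

lemma nF: "length (filter Not pd) = 2*n - n"
  using TF_sum[of "2*n" pd] nT by simp

lemma cntF_P: "1 \<le> j \<Longrightarrow> j \<le> n \<Longrightarrow> length (filter Not (take (X j + j - 1) pd)) = X j"
  using xcoord_dec[of j] north_dec[of j] unfolding xcoord_def by simp

lemma ycoord_dec: "1 \<le> k \<Longrightarrow> k \<le> n \<Longrightarrow> ycoord pd k = card {j\<in>{1..n}. X j < k}"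
proof -
  assume k: "1 \<le> k" "k \<le> n"
  define Q where "Q = east_idx pd ! (k-1)"
  have j: "k-1 < length (filter Not pd)" using nF k by simp
  note ep = east_props[OF j, folded Q_def]
  have "ycoord pd k = length (filter id (take Q pd))" unfolding ycoord_def Q_def by simp
  also have "\<dots> = card {j\<in>{1..n}. X j + j - 1 < Q}" by (rule cntT)
  also have "{j\<in>{1..n}. X j + j - 1 < Q} = {j\<in>{1..n}. X j < k}"
  proof (rule Collect_cong)
    fix j
    show "(j \<in> {1..n} \<and> X j + j - 1 < Q) \<longleftrightarrow> (j \<in> {1..n} \<and> X j < k)"
    proof (cases "j \<in> {1..n}")
      case True
      have ne: "X j + j - 1 \<noteq> Q" using ep(2) dec_nth[of Q] ep(1) True by auto
      show ?thesis
      proof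
        assume "j \<in> {1..n} \<and> X j + j - 1 < Q"
        then have "length (filter Not (take (X j + j - 1) pd)) \<le> length (filter Not (take Q pd))"
          by (intro len_filter_take_mono) simp
        then show "j \<in> {1..n} \<and> X j < k" using cntF_P[of j] True ep(3) k by simp
      next
        assume h: "j \<in> {1..n} \<and> X j < k"
        show "j \<in> {1..n} \<and> X j + j - 1 < Q"
        proof (rule ccontr)
          assume "\<not> (j \<in> {1..n} \<and> X j + j - 1 < Q)"
          then have "Suc Q \<le> X j + j - 1" using True ne by simp
          then have "length (filter Not (take (Suc Q) pd)) \<le> length (filter Not (take (X j + j - 1) pd))"
            by (rule len_filter_take_mono)
          moreover have "take (Suc Q) pd = take Q pd @ [pd!Q]" using ep(1) by (simp add: take_Suc_conv_app_nth)
          ultimately show False using ep(2,3) cntF_P[of j] True h k by simp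
        qed
      qed
    qed auto
  qed
  finally show ?thesis .
qed

lemma valley_dec: "1 \<le> k \<Longrightarrow> k \<le> n \<Longrightarrow> (\<exists>c. valley pd c k) \<longleftrightarrow> X k \<noteq> X (k-1)"
proof -
  assume k: "1 \<le> k" "k \<le> n"
  have "(\<exists>c. valley pd c k) \<longleftrightarrow> (\<exists>i. Suc i < length pd \<and> \<not> pd!i \<and> pd!(Suc i) \<and> length (filter id (take (Suc (Suc i)) pd)) = k)"
    unfolding valley_def by auto
  also have "\<dots> \<longleftrightarrow> (1 \<le> X k + k - 1 \<and> \<not> pd!(X k + k - 2))"
  proof
    assume "\<exists>i. Suc i < length pd \<and> \<not> pd!i \<and> pd!(Suc i) \<and> length (filter id (take (Suc (Suc i)) pd)) = k"
    then obtain i where i: "Suc i < length pd" "\<not> pd!i" "pd!(Suc i)" "length (filter id (take (Suc (Suc i)) pd)) = k" by blast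
    obtain j where jj: "j \<in> {1..n}" "Suc i = X j + j - 1" using i(1,3) dec_nth by auto
    have "Suc (Suc i) = X j + j" using jj by simp
    then have "{k'\<in>{1..n}. X k' + k' - 1 < Suc (Suc i)} = {1..j}"
      using below_set[of j] jj by simp
    then have "j = k" using i(4) cntT by simp
    then have "X k + k - 2 = i" "1 \<le> X k + k - 1" using jj by auto
    then show "1 \<le> X k + k - 1 \<and> \<not> pd!(X k + k - 2)" using i(2) by simp
  next
    assume h: "1 \<le> X k + k - 1 \<and> \<not> pd!(X k + k - 2)"
    define i where "i = X k + k - 2"
    have si: "Suc i = X k + k - 1" using h i_def by linarith
    have "Suc i < length pd" using si P_bound[OF k] by simp
    moreover have "pd!(Suc i)" using si dec_nth P_bound[OF k] k by auto
    moreover have "length (filter id (take (Suc (Suc i)) pd)) = k"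
    proof -
      have "Suc (Suc i) = X k + k" using si k by simp
      then have "{k'\<in>{1..n}. X k' + k' - 1 < Suc (Suc i)} = {1..k}"
        using below_set[of k] k by simp
      then show ?thesis using cntT by simp
    qed
    moreover have "\<not> pd!i" using h i_def by simp
    ultimately show "\<exists>i. Suc i < length pd \<and> \<not> pd!i \<and> pd!(Suc i) \<and> length (filter id (take (Suc (Suc i)) pd)) = k"
      by blast
  qed
  also have "\<dots> \<longleftrightarrow> X k \<noteq> X (k-1)"
  proof (cases "k = 1")
    case True
    then show ?thesis using validX_lt[OF vX, of 1] validX_0[OF vX] k by simp
  next
    case False
    then have k2: "2 \<le> k" using k by simp
    have "pd!(X k + k - 2) \<longleftrightarrow> (\<exists>j\<in>{1..n}. X k + k - 2 = X j + j - 1)"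
      using dec_nth[of "X k + k - 2"] P_bound[OF k] by simp
    also have "\<dots> \<longleftrightarrow> X (k-1) = X k"
    proof
      assume "\<exists>j\<in>{1..n}. X k + k - 2 = X j + j - 1"
      then obtain j where jj: "j \<in> {1..n}" "X k + k - 2 = X j + j - 1" by blast
      have "j \<noteq> k"
      proof
        assume "j = k" then show False using jj(2) k2 by simp
      qed
      moreover have "\<not> k < j"
      proof
        assume "k < j" then have "X k + k - 1 < X j + j - 1" using P_mono[of k j] jj k2 by simp
        then show False using jj(2) by linarith
      qed
      ultimately have "j < k" by simp
      then have "j \<le> k - 1" by simp
      moreover have "\<not> j < k - 1"
      proof
        assume "j < k - 1"
        then have "X j + j - 1 < X (k-1) + (k-1) - 1" using P_mono[of j "k-1"] jj k by simp
        then show False using jj validX_mono[OF vX, of "k-1" k] k k2 by simp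
      qed
      ultimately have "j = k - 1" by simp
      then show "X (k-1) = X k" using jj validX_mono[OF vX, of "k-1" k] k k2 by simp
    next
      assume "X (k-1) = X k"
      then show "\<exists>j\<in>{1..n}. X k + k - 2 = X j + j - 1" using k k2 by (intro bexI[of _ "k-1"]) auto
    qed
    finally show ?thesis using k2 by auto
  qed
  finally show ?thesis .
qed

end



context
  fixes n :: nat and X :: "nat \<Rightarrow> nat"
  assumes vX: "validX n X"
begin

lemma cy_Suc: "card {j\<in>{1..n}. X j < Suc k} = card {j\<in>{1..n}. X j < k} + card {j\<in>{1..n}. X j = k}"
proof -
  have "{j\<in>{1..n}. X j < Suc k} = {j\<in>{1..n}. X j < k} \<union> {j\<in>{1..n}. X j = k}" by auto
  moreover have "{j\<in>{1..n}. X j < k} \<inter> {j\<in>{1..n}. X j = k} = {}" by auto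
  ultimately show ?thesis by (simp add: card_Un_disjoint)
qed

lemma cy_n: "card {j\<in>{1..n}. X j < n} = n"
proof -
  have "{j\<in>{1..n}. X j < n} = {1..n}"
  proof (rule set_eqI)
    fix j show "j \<in> {j\<in>{1..n}. X j < n} \<longleftrightarrow> j \<in> {1..n}"
      using validX_lt[OF vX, of j] by auto
  qed
  then show ?thesis by simp
qed

lemma cy_ge: "k < n \<Longrightarrow> Suc k \<le> card {j\<in>{1..n}. X j < Suc k}"
proof -
  assume k: "k < n"
  have "{1..Suc k} \<subseteq> {j\<in>{1..n}. X j < Suc k}"
  proof
    fix j assume j: "j \<in> {1..Suc k}"
    then have "X j < j" using validX_lt[OF vX, of j] k by simp
    then show "j \<in> {j\<in>{1..n}. X j < Suc k}" using j k by auto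
  qed
  then have "card {1..Suc k} \<le> card {j\<in>{1..n}. X j < Suc k}" by (intro card_mono) auto
  then show ?thesis by simp
qed

lemma cy_le: "card {j\<in>{1..n}. X j < m} \<le> n"
proof -
  have "card {j\<in>{1..n}. X j < m} \<le> card {1..n}" by (intro card_mono) auto
  then show ?thesis by simp
qed

lemma col_dec: "1 \<le> k \<Longrightarrow> k \<le> n \<Longrightarrow> col_area n (decode n X) k = int (card {j\<in>{1..n}. X j < k}) - int k"
  unfolding col_area_def using ycoord_dec[OF vX] by simp

lemma row_dec: "1 \<le> k \<Longrightarrow> k \<le> n \<Longrightarrow> row_area (decode n X) k = int k - 1 - int (X k)"
  unfolding row_area_def using xcoord_dec[OF vX] by simp

lemma row_dec0: "k \<le> n \<Longrightarrow> row_area (decode n X) k = int k - 1 - int (X k)"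
  using row_dec validX_0[OF vX] by (cases "k = 0") (auto simp: row_area_def)

lemma setN_dec: "setN n (decode n X) = {k\<in>{1..n}. X k = X (k-1)}"
  unfolding setN_def using valley_dec[OF vX] by auto

lemma setD_dec: "setD n (decode n X) = {k\<in>{1..n}. k = n \<or> k \<notin> X`{1..n}}"
proof -
  have "k \<in> setD n (decode n X) \<longleftrightarrow> k \<in> {k\<in>{1..n}. k = n \<or> k \<notin> X`{1..n}}" for k
  proof (cases "1 \<le> k \<and> k \<le> n")
    case True
    show ?thesis
    proof (cases "k = n")
      case True2: True
      have "col_area n (decode n X) (k+1) = -1" unfolding col_area_def using True2 by simp
      moreover have "col_area n (decode n X) k = 0" using col_dec[of k] True True2 cy_n by simp
      ultimately show ?thesis unfolding setD_def using True True2 by simp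
    next
      case False
      have "col_area n (decode n X) (k+1) = int (card {j\<in>{1..n}. X j < Suc k}) - int (Suc k)"
        using col_dec[of "k+1"] True False by simp
      moreover have "col_area n (decode n X) k = int (card {j\<in>{1..n}. X j < k}) - int k"
        using col_dec[of k] True by simp
      moreover have "card {j\<in>{1..n}. X j = k} = 0 \<longleftrightarrow> k \<notin> X`{1..n}" by auto
      ultimately show ?thesis unfolding setD_def using True False cy_Suc[of k] by auto
    qed
  next
    case False then show ?thesis unfolding setD_def by auto
  qed
  then show ?thesis by blast
qed

lemma setF_dec: "1 \<le> k \<Longrightarrow> k \<le> n \<Longrightarrow> k \<in> setF n (decode n X) \<longleftrightarrow>
   (if k = n then X n = X (n-1) else X (card {j\<in>{1..n}. X j < Suc k}) = X (k-1))"
proof -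
  assume k: "1 \<le> k" "k \<le> n"
  show ?thesis
  proof (cases "k = n")
    case True
    have c: "col_area n (decode n X) (k+1) = -1" unfolding col_area_def using True by simp
    have "nat (int k + 1 + -1) = n" using True by simp
    then have "k \<in> setF n (decode n X) \<longleftrightarrow> row_area (decode n X) n = row_area (decode n X) (n-1) + 1"
      unfolding setF_def using c k True by (simp add: algebra_simps)
    also have "\<dots> \<longleftrightarrow> X n = X (n-1)" using row_dec0[of n] row_dec0[of "n-1"] k True by (simp add: of_nat_diff)
    finally show ?thesis using True by simp
  next
    case False
    define c where "c = card {j\<in>{1..n}. X j < Suc k}"
    have c1: "Suc k \<le> c" "c \<le> n" using cy_ge[of k] cy_le[of "Suc k"] k False c_def by auto
    have col: "col_area n (decode n X) (k+1) = int c - int (Suc k)"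
      using col_dec[of "k+1"] k False c_def by simp
    have "nat (int k + 1 + col_area n (decode n X) (k + 1)) = c" using col c1 by simp
    then have "k \<in> setF n (decode n X) \<longleftrightarrow> row_area (decode n X) c = row_area (decode n X) (k-1) + (int c - int (Suc k)) + 2"
      unfolding setF_def using col k by simp
    also have "\<dots> \<longleftrightarrow> X c = X (k-1)" using row_dec0[of c] row_dec0[of "k-1"] c1 k by (simp add: of_nat_diff)
    finally have "k \<in> setF n (decode n X) \<longleftrightarrow> X c = X (k-1)" .
    then show ?thesis using False c_def by simp
  qed
qed

lemma condA_dec: "(setN n (decode n X) \<inter> setD n (decode n X) \<subseteq> setF n (decode n X)) \<longleftrightarrow> goodX n X"
proof
  assume h: "setN n (decode n X) \<inter> setD n (decode n X) \<subseteq> setF n (decode n X)"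
  show "goodX n X" unfolding goodX_def
  proof (intro allI impI)
    fix k assume k: "1 \<le> k" "k < n" "X k = X (k-1)" "k \<notin> X`{1..n}"
    then have "k \<in> setN n (decode n X) \<inter> setD n (decode n X)" unfolding setN_dec setD_dec by simp
    then have "k \<in> setF n (decode n X)" using h by blast
    then show "X (card {j\<in>{1..n}. X j < Suc k}) = X k" using setF_dec[of k] k by simp
  qed
next
  assume g: "goodX n X"
  show "setN n (decode n X) \<inter> setD n (decode n X) \<subseteq> setF n (decode n X)"
  proof
    fix k assume "k \<in> setN n (decode n X) \<inter> setD n (decode n X)"
    then have k: "1 \<le> k" "k \<le> n" "X k = X (k-1)" "k = n \<or> k \<notin> X`{1..n}"
      unfolding setN_dec setD_dec by simp_all
    show "k \<in> setF n (decode n X)"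
    proof (cases "k = n")
      case True then show ?thesis using setF_dec[of k] k by simp
    next
      case False
      then have "X (card {j\<in>{1..n}. X j < Suc k}) = X k" using g[unfolded goodX_def, rule_format, of k] k by simp
      then show ?thesis using setF_dec[of k] k False by simp
    qed
  qed
qed

lemma condB_dec: "(setN n (decode n X) \<inter> setD n (decode n X) = {}) \<longleftrightarrow>
   (\<forall>k. 1 \<le> k \<longrightarrow> k \<le> n \<longrightarrow> X k = X (k-1) \<longrightarrow> k < n \<and> k \<in> X`{1..n})"
proof
  assume h: "setN n (decode n X) \<inter> setD n (decode n X) = {}"
  show "\<forall>k. 1 \<le> k \<longrightarrow> k \<le> n \<longrightarrow> X k = X (k-1) \<longrightarrow> k < n \<and> k \<in> X`{1..n}"
  proof (intro allI impI)
    fix k assume k: "1 \<le> k" "k \<le> n" "X k = X (k-1)"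
    have "k \<notin> setN n (decode n X) \<inter> setD n (decode n X)" using h by blast
    then show "k < n \<and> k \<in> X`{1..n}" unfolding setN_dec setD_dec using k by auto
  qed
next
  assume h: "\<forall>k. 1 \<le> k \<longrightarrow> k \<le> n \<longrightarrow> X k = X (k-1) \<longrightarrow> k < n \<and> k \<in> X`{1..n}"
  show "setN n (decode n X) \<inter> setD n (decode n X) = {}"
  proof (rule ccontr)
    assume "setN n (decode n X) \<inter> setD n (decode n X) \<noteq> {}"
    then obtain k where "k \<in> setN n (decode n X) \<inter> setD n (decode n X)" by blast
    then have k: "1 \<le> k" "k \<le> n" "X k = X (k-1)" "k = n \<or> k \<notin> X`{1..n}"
      unfolding setN_dec setD_dec by simp_all
    then show False using h[rule_format, of k] by auto
  qed
qed

end

lemma decode_cong: "(\<And>k. 1 \<le> k \<Longrightarrow> k \<le> n \<Longrightarrow> X k = Y k) \<Longrightarrow> decode n X = decode n Y"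
  unfolding decode_def by (intro map_cong refl bex_cong) auto



definition fmap :: "nat \<Rightarrow> bool list \<Rightarrow> int list" where "fmap n p = sOf n (Xf n p)"

lemma Xf_dec: assumes vX: "validX n X" and z: "\<And>k. n < k \<Longrightarrow> X k = 0"
  shows "Xf n (decode n X) = X"
proof
  fix k show "Xf n (decode n X) k = X k"
    using xcoord_dec[OF vX, of k] validX_0[OF vX] z[of k] unfolding Xf_def by auto
qed

lemma Xs_zero: "n < k \<Longrightarrow> Xs n s k = 0" unfolding Xs_def by simp

lemma surj_part:
  assumes n1: "1 \<le> n" and mz: "motzkin_path n s"
  shows "\<exists>p. dyck_path n p \<and> goodX n (Xf n p) \<and> validX n (Xf n p) \<and> fmap n p = s \<and> p = decode n (Xs n s)"
proof -
  define X where "X = Xs n s"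
  have vX: "validX n X" unfolding X_def by (rule valid_Xs[OF mz n1])
  have gX: "goodX n X" unfolding X_def by (rule good_Xs[OF mz n1])
  have sX: "sOf n X = s" unfolding X_def by (rule sOf_Xs[OF mz n1])
  have z: "\<And>k. n < k \<Longrightarrow> X k = 0" unfolding X_def by (rule Xs_zero)
  have XX: "Xf n (decode n X) = X" by (rule Xf_dec[OF vX z])
  have "dyck_path n (decode n X) \<and> goodX n (Xf n (decode n X)) \<and> validX n (Xf n (decode n X)) \<and> fmap n (decode n X) = s \<and> decode n X = decode n (Xs n s)"
    using dyck_dec[OF vX] vX gX sX unfolding fmap_def XX by (simp add: X_def)
  then show ?thesis by (rule exI)
qed

theorem main_a:
  assumes n1: "1 \<le> n"
  shows "bij_betw (fmap n) {p. dyck_path n p \<and> setN n p \<inter> setD n p \<subseteq> setF n p} {s. motzkin_path n s}"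
    and "bij_betw (fmap n) {p. dyck_path n p \<and> setN n p \<inter> setD n p = {}} {s. riordan_path n s}"
proof -
  let ?A = "{p. dyck_path n p \<and> setN n p \<inter> setD n p \<subseteq> setF n p}"
  let ?B = "{p. dyck_path n p \<and> setN n p \<inter> setD n p = {}}"
  have decA: "p = decode n (Xf n p) \<and> validX n (Xf n p) \<and> goodX n (Xf n p)" if "p \<in> ?A" for p
  proof -
    have d: "dyck_path n p" using that by simp
    note dd = dyck_decode[OF d]
    have "setN n (decode n (Xf n p)) \<inter> setD n (decode n (Xf n p)) \<subseteq> setF n (decode n (Xf n p))"
      using that dd(1)[symmetric] by simp
    then show ?thesis using condA_dec[OF dd(2)] dd by simp
  qed
  have BA: "?B \<subseteq> ?A" by auto
  have inj: "inj_on (fmap n) ?A"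
  proof (rule inj_onI)
    fix p q assume p: "p \<in> ?A" and q: "q \<in> ?A" and e: "fmap n p = fmap n q"
    note pp = decA[OF p] and qq = decA[OF q]
    have "Xf n p k = Xf n q k" if "k \<le> n" for k
      using sOf_inj[of n "Xf n p" "Xf n q"] pp qq e that unfolding fmap_def by blast
    then have "decode n (Xf n p) = decode n (Xf n q)" by (intro decode_cong) simp
    then show "p = q" using pp qq by simp
  qed
  show "bij_betw (fmap n) ?A {s. motzkin_path n s}"
    unfolding bij_betw_def
  proof (intro conjI inj)
    show "fmap n ` ?A = {s. motzkin_path n s}"
    proof
      show "fmap n ` ?A \<subseteq> {s. motzkin_path n s}"
      proof
        fix s assume "s \<in> fmap n ` ?A"
        then obtain p where p: "p \<in> ?A" "s = fmap n p" by blast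
        then show "s \<in> {s. motzkin_path n s}" using decA[OF p(1)] motzkin_sOf unfolding fmap_def by simp
      qed
    next
      show "{s. motzkin_path n s} \<subseteq> fmap n ` ?A"
      proof
        fix s assume "s \<in> {s. motzkin_path n s}"
        then obtain p where p: "dyck_path n p" "goodX n (Xf n p)" "validX n (Xf n p)" "fmap n p = s"
          using surj_part[OF n1] by blast
        have "p = decode n (Xf n p)" using dyck_decode[OF p(1)] by simp
        then have "setN n p \<inter> setD n p \<subseteq> setF n p" using condA_dec[OF p(3)] p(2) by metis
        then show "s \<in> fmap n ` ?A" using p by blast
      qed
    qed
  qed
  show "bij_betw (fmap n) ?B {s. riordan_path n s}"
    unfolding bij_betw_def
  proof (intro conjI)
    show "inj_on (fmap n) ?B" using inj_on_subset[OF inj BA] .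
    show "fmap n ` ?B = {s. riordan_path n s}"
    proof
      show "fmap n ` ?B \<subseteq> {s. riordan_path n s}"
      proof
        fix s assume "s \<in> fmap n ` ?B"
        then obtain p where p: "p \<in> ?B" "s = fmap n p" by blast
        have pA: "p \<in> ?A" using p BA by blast
        note pp = decA[OF pA]
        have "setN n (decode n (Xf n p)) \<inter> setD n (decode n (Xf n p)) = {}" using p(1) pp by simp
        then have "\<forall>k. 1 \<le> k \<longrightarrow> k \<le> n \<longrightarrow> Xf n p k = Xf n p (k-1) \<longrightarrow> k < n \<and> k \<in> Xf n p`{1..n}"
          using condB_dec[of n "Xf n p"] pp by blast
        then show "s \<in> {s. riordan_path n s}" using riordan_iff[of n "Xf n p"] pp p(2) unfolding fmap_def by simp
      qed
    next
      show "{s. riordan_path n s} \<subseteq> fmap n ` ?B"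
      proof
        fix s assume "s \<in> {s. riordan_path n s}"
        then have r: "riordan_path n s" by simp
        then have "motzkin_path n s" unfolding riordan_path_def by simp
        then obtain p where p: "dyck_path n p" "goodX n (Xf n p)" "validX n (Xf n p)" "fmap n p = s"
          using surj_part[OF n1] by blast
        have pd: "p = decode n (Xf n p)" using dyck_decode[OF p(1)] by simp
        have "\<forall>k. 1 \<le> k \<longrightarrow> k \<le> n \<longrightarrow> Xf n p k = Xf n p (k-1) \<longrightarrow> k < n \<and> k \<in> Xf n p`{1..n}"
          using riordan_iff[OF p(3) p(2)] r p(4) unfolding fmap_def by simp
        then have "setN n (decode n (Xf n p)) \<inter> setD n (decode n (Xf n p)) = {}"
          using condB_dec[OF p(3)] by blast
        then have "setN n p \<inter> setD n p = {}" using pd by metis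
        then show "s \<in> fmap n ` ?B" using p by blast
      qed
    qed
  qed
qed

theorem mainTheorem7:
  fixes n :: nat
  assumes "n \<ge> 1"
  shows "card {p. dyck_path n p \<and> setN n p \<inter> setD n p \<subseteq> setF n p} = card {s. motzkin_path n s}
       \<and> card {p. dyck_path n p \<and> setN n p \<inter> setD n p = {}} = card {s. riordan_path n s}"
  using bij_betw_same_card[OF main_a(1)[OF assms]] bij_betw_same_card[OF main_a(2)[OF assms]] by simp

end
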